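(* Let $G=(V,E)$ be a graph and $\mathcal{U}$ a set of utter cliques of $G$ such that $\bigcup_{[W,F]\in\mathcal{U}}E(W)=E$. Then the extended incidence vectors $(\chi^S,\zeta^{E(S)})$ of the co-2-plexes $S$ of $G$ are exactly the vectors $(x,y)\in\{0,1\}^V\times\{0,1\}^E$ satisfying $x(W)+y(F\cap E(V\setminus W))-y(E(W))\le 1$ for all $[W,F]\in\mathcal{U}$ and $y(\delta(v))\le x_v$ for all $v\in V$.
   Context: For $W\subseteq V$, $E(W)$ is the set of edges with both endpoints in $W$, $\delta(v)$ the set of edges incident to $v$, $x(A)=\sum_{a\in A}x_a$. A co-2-plex is a set $S\subseteq V$ such that $G[S]$ has maximum degree at most 1. The utter graph $u(G)$ has vertex set $V\cup E$, where two elements are adjacent iff: they are two adjacent vertices of $G$; or a vertex and an edge incident to it; or two edges sharing an endpoint; or a vertex $w$ and an edge $uv$ not containing $w$ with $wu\in E$ or $wv\in E$; or two disjoint edges $uv,xy$ such that some edge of $G$ joins $\{u,v\}$ to $\{x,y\}$. For $W\subseteq V$, $F\subseteq E$, $[W,F]$ is an utter clique if $W\cup F$ is a clique of $u(G)$. *)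

theory Defs
  imports Main
begin

definition graph :: "'a set \<Rightarrow> 'a set set \<Rightarrow> bool" where
  "graph V E \<longleftrightarrow> finite V \<and> (\<forall>e\<in>E. e \<subseteq> V \<and> card e = 2)"

definition induced_edges :: "'a set set \<Rightarrow> 'a set \<Rightarrow> 'a set set" where
  "induced_edges E W = {e \<in> E. e \<subseteq> W}"

definition delta :: "'a set set \<Rightarrow> 'a \<Rightarrow> 'a set set" where
  "delta E v = {e \<in> E. v \<in> e}"

definition co2plex :: "'a set \<Rightarrow> 'a set set \<Rightarrow> 'a set \<Rightarrow> bool" where
  "co2plex V E S \<longleftrightarrow> S \<subseteq> V \<and> (\<forall>v\<in>S. card {u \<in> S. {u, v} \<in> E} \<le> 1)"

text \<open>Adjacency in the utter graph u(G) (vertex set V + E).\<close>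
definition utter_adj_vv :: "'a set set \<Rightarrow> 'a \<Rightarrow> 'a \<Rightarrow> bool" where
  "utter_adj_vv E u w \<longleftrightarrow> {u, w} \<in> E"

definition utter_adj_ve :: "'a set set \<Rightarrow> 'a \<Rightarrow> 'a set \<Rightarrow> bool" where
  "utter_adj_ve E w e \<longleftrightarrow> w \<in> e \<or> (w \<notin> e \<and> (\<exists>u\<in>e. {w, u} \<in> E))"

definition utter_adj_ee :: "'a set set \<Rightarrow> 'a set \<Rightarrow> 'a set \<Rightarrow> bool" where
  "utter_adj_ee E e f \<longleftrightarrow> e \<inter> f \<noteq> {} \<or> (e \<inter> f = {} \<and> (\<exists>u\<in>e. \<exists>x\<in>f. {u, x} \<in> E))"

definition utter_clique :: "'a set \<Rightarrow> 'a set set \<Rightarrow> 'a set \<Rightarrow> 'a set set \<Rightarrow> bool" where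
  "utter_clique V E W F \<longleftrightarrow> W \<subseteq> V \<and> F \<subseteq> E
     \<and> (\<forall>u\<in>W. \<forall>w\<in>W. u \<noteq> w \<longrightarrow> utter_adj_vv E u w)
     \<and> (\<forall>w\<in>W. \<forall>e\<in>F. utter_adj_ve E w e)
     \<and> (\<forall>e\<in>F. \<forall>f\<in>F. e \<noteq> f \<longrightarrow> utter_adj_ee E e f)"

end

theory Submission
  imports Defs
begin

lemma edge2: assumes "graph V E" "e \<in> E" shows "\<exists>a b. a \<noteq> b \<and> e = {a,b}"
proof -
  have "card e = 2" using assms unfolding graph_def by blast
  then obtain a b where "e = {a,b}" "a \<noteq> b" unfolding card_2_iff by blast
  thus ?thesis by blast
qed

lemma edge_at: assumes "graph V E" "e \<in> E" "v \<in> e" shows "\<exists>a. a \<noteq> v \<and> e = {v,a}"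
  using edge2[OF assms(1,2)] assms(3) by auto

lemma finE: "graph V E \<Longrightarrow> finite E"
  unfolding graph_def by (meson Pow_iff finite_Pow_iff finite_subset subsetI)

lemma edge_sub: "graph V E \<Longrightarrow> e \<in> E \<Longrightarrow> e \<subseteq> V" by (auto simp: graph_def)

lemma nbr: assumes "graph V E" "co2plex V E S" "v \<in> S" "a \<in> S" "b \<in> S" "{a,v} \<in> E" "{b,v} \<in> E"
  shows "a = b"
proof -
  have "finite S" using assms(1,2) unfolding graph_def co2plex_def using finite_subset by blast
  hence fin: "finite {u \<in> S. {u, v} \<in> E}" by simp
  have "card {u \<in> S. {u, v} \<in> E} \<le> 1" using assms(2,3) unfolding co2plex_def by blast
  moreover have "{a,b} \<subseteq> {u \<in> S. {u, v} \<in> E}" using assms by auto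
  ultimately have "card {a,b} \<le> 1" using card_mono[OF fin] by (meson le_trans)
  thus ?thesis by (cases "a = b") auto
qed

lemma share: assumes G: "graph V E" and co: "co2plex V E S" and "e\<in>E" "f\<in>E" "e\<subseteq>S" "f\<subseteq>S" "v\<in>e" "v\<in>f"
  shows "e=f"
proof -
  obtain a where a: "a\<noteq>v" "e={v,a}" using edge_at[OF G \<open>e\<in>E\<close> \<open>v\<in>e\<close>] by blast
  obtain b where b: "b\<noteq>v" "f={v,b}" using edge_at[OF G \<open>f\<in>E\<close> \<open>v\<in>f\<close>] by blast
  have "a=b" using nbr[OF G co, of v a b] a b assms by (auto simp: insert_commute)
  thus ?thesis using a b by simp
qed

lemma sum_ind: "finite A \<Longrightarrow> (\<Sum>e\<in>A. if e \<in> B then 1 else (0::int)) = int (card (A \<inter> B))"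
proof -
  assume "finite A"
  have "{x \<in> A. x \<in> B} = A \<inter> B" by auto
  thus ?thesis using sum.inter_filter[OF \<open>finite A\<close>, of "\<lambda>_. (1::int)" "\<lambda>x. x \<in> B"] by simp
qed

lemma clique_card:
  assumes G: "graph V E" and co: "co2plex V E S" and uc: "utter_clique V E W F"
  shows "int (card (W \<inter> S)) + int (card (F \<inter> induced_edges E (V - W) \<inter> induced_edges E S))
     - int (card (induced_edges E W \<inter> induced_edges E S)) \<le> 1"
proof -
  have finV: "finite V" using G graph_def by blast
  have finE: "finite E" using G by (rule finE)
  have WV: "W\<subseteq>V" and FE: "F\<subseteq>E" and vv: "\<forall>u\<in>W. \<forall>w\<in>W. u\<noteq>w \<longrightarrow> {u,w}\<in>E"
    and ve: "\<forall>w\<in>W. \<forall>e\<in>F. utter_adj_ve E w e" and ee: "\<forall>e\<in>F. \<forall>f\<in>F. e\<noteq>f \<longrightarrow> utter_adj_ee E e f"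
    using uc unfolding utter_clique_def utter_adj_vv_def by auto
  define T where "T = W \<inter> S"
  define Fp where "Fp = F \<inter> induced_edges E (V - W) \<inter> induced_edges E S"
  define Ew where "Ew = induced_edges E W \<inter> induced_edges E S"
  have finT: "finite T" using finV WV finite_subset unfolding T_def by blast
  have finFp: "finite Fp" using finE FE Fp_def finite_subset by blast
  have finEw: "finite Ew" using finE unfolding Ew_def induced_edges_def by simp
  have Fp1: "card Fp \<le> Suc 0"
  proof (subst card_le_Suc0_iff_eq[OF finFp], intro ballI)
    fix e f assume ef: "e\<in>Fp" "f\<in>Fp"
    have eE: "e\<in>E" "e\<subseteq>S" "e\<in>F" using ef unfolding Fp_def induced_edges_def by auto
    have fE: "f\<in>E" "f\<subseteq>S" "f\<in>F" using ef unfolding Fp_def induced_edges_def by auto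
    show "e = f"
    proof (rule ccontr)
      assume ne: "e\<noteq>f"
      have "e \<inter> f \<noteq> {}"
      proof -
        have "utter_adj_ee E e f" using ee eE fE ne by blast
        then consider "e\<inter>f \<noteq> {}" | u z where "u\<in>e" "z\<in>f" "{u,z}\<in>E" unfolding utter_adj_ee_def by blast
        then show ?thesis
        proof cases
          case 1 then show ?thesis .
        next
          case 2
          obtain u' where u': "u'\<noteq>u" "e={u,u'}" using edge_at[OF G eE(1) 2(1)] by blast
          have "u' = z" using nbr[OF G co, of u u' z] u' 2 eE fE by (auto simp: insert_commute)
          thus ?thesis using u' 2 by blast
        qed
      qed
      then obtain v where "v\<in>e" "v\<in>f" by blast
      then show False using share[OF G co eE(1) fE(1) eE(2) fE(2)] ne by blast
    qed
  qed
  show ?thesis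
  proof (cases "\<exists>w1 w2. w1\<noteq>w2 \<and> w1\<in>T \<and> w2\<in>T")
    case True
    then obtain w1 w2 where w: "w1\<noteq>w2" "w1\<in>T" "w2\<in>T" by blast
    have w12E: "{w2,w1}\<in>E" using vv w unfolding T_def by auto
    have Teq: "T = {w1,w2}"
    proof
      show "T \<subseteq> {w1,w2}"
      proof
        fix w3 assume "w3\<in>T"
        show "w3 \<in> {w1,w2}"
        proof (cases "w3 = w1")
          case False
          have "{w3,w1}\<in>E" using vv \<open>w3\<in>T\<close> w False unfolding T_def by auto
          hence "w3 = w2" using nbr[OF G co, of w1 w3 w2] w12E w \<open>w3\<in>T\<close> unfolding T_def by blast
          thus ?thesis by simp
        qed simp
      qed
      show "{w1,w2} \<subseteq> T" using w by blast
    qed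
    have cT: "card T = 2" using Teq w by simp
    have "{w1,w2} \<in> Ew" using w12E w unfolding Ew_def induced_edges_def unfolding T_def by (auto simp: insert_commute)
    hence cEw: "card Ew \<ge> 1" using finEw by (metis One_nat_def Suc_leI card_gt_0_iff empty_iff)
    have "Fp = {}"
    proof (rule ccontr)
      assume "Fp \<noteq> {}" then obtain f where f: "f\<in>Fp" by blast
      have fF: "f\<in>F" "f\<subseteq>V-W" "f\<subseteq>S" "f\<in>E" using f unfolding Fp_def induced_edges_def by auto
      have "utter_adj_ve E w1 f" using ve w fF unfolding T_def by blast
      moreover have "w1 \<notin> f" using fF w unfolding T_def by blast
      ultimately obtain u where "u\<in>f" "{w1,u}\<in>E" unfolding utter_adj_ve_def by blast
      hence "u = w2" using nbr[OF G co, of w1 u w2] w12E w fF unfolding T_def by (auto simp: insert_commute)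
      thus False using \<open>u\<in>f\<close> fF w unfolding T_def by blast
    qed
    thus ?thesis using cT cEw unfolding T_def Fp_def Ew_def by simp
  next
    case False
    hence T1: "card T \<le> 1" using card_le_Suc0_iff_eq[OF finT] by auto
    show ?thesis
    proof (cases "T = {}")
      case True
      thus ?thesis using Fp1 unfolding T_def Fp_def Ew_def by simp
    next
      case False
      then obtain w where w: "w\<in>T" by blast
      have "Fp = {}"
      proof (rule ccontr)
        assume "Fp \<noteq> {}" then obtain f where f: "f\<in>Fp" by blast
        have fF: "f\<in>F" "f\<subseteq>V-W" "f\<subseteq>S" "f\<in>E" using f unfolding Fp_def induced_edges_def by auto
        have "utter_adj_ve E w f" using ve w fF unfolding T_def by blast
        moreover have "w \<notin> f" using fF w unfolding T_def by blast
        ultimately obtain u where u: "u\<in>f" "{w,u}\<in>E" unfolding utter_adj_ve_def by blast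
        obtain u' where u': "u'\<noteq>u" "f={u,u'}" using edge_at[OF G fF(4) u(1)] by blast
        have "w = u'" using nbr[OF G co, of u w u'] u u' w fF unfolding T_def by (auto simp: insert_commute)
        thus False using u' \<open>w\<notin>f\<close> by blast
      qed
      thus ?thesis using T1 unfolding T_def Fp_def Ew_def by simp
    qed
  qed
qed

lemma bwd:
  fixes x :: "'a \<Rightarrow> int" and y :: "'a set \<Rightarrow> int"
  assumes G: "graph V E" and Ucl: "\<forall>(W, F)\<in>U. utter_clique V E W F" and co: "co2plex V E S"
    and xS: "\<forall>v\<in>V. x v = (if v\<in>S then 1 else 0)"
    and yS: "\<forall>e\<in>E. y e = (if e\<in>induced_edges E S then 1 else 0)"
  shows "(\<forall>v\<in>V. x v \<in> {0, 1}) \<and> (\<forall>e\<in>E. y e \<in> {0, 1})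
     \<and> (\<forall>(W, F)\<in>U. sum x W + sum y (F \<inter> induced_edges E (V - W))
                       - sum y (induced_edges E W) \<le> 1)
     \<and> (\<forall>v\<in>V. sum y (delta E v) \<le> x v)"
proof (intro conjI)
  have finV: "finite V" using G unfolding graph_def by blast
  have finE: "finite E" using G by (rule finE)
  have SV: "S \<subseteq> V" using co unfolding co2plex_def by blast
  have sy: "sum y A = int (card (A \<inter> induced_edges E S))" if "A \<subseteq> E" for A
  proof -
    have "sum y A = (\<Sum>e\<in>A. if e \<in> induced_edges E S then 1 else 0)"
      apply (rule sum.cong) using yS that by auto
    also have "\<dots> = int (card (A \<inter> induced_edges E S))" by (rule sum_ind) (rule finite_subset[OF that finE])
    finally show ?thesis .
  qed
  show "\<forall>v\<in>V. x v \<in> {0, 1}" using xS by auto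
  show "\<forall>e\<in>E. y e \<in> {0, 1}" using yS by auto
  show "\<forall>v\<in>V. sum y (delta E v) \<le> x v"
  proof
    fix v assume vV: "v\<in>V"
    have eq: "sum y (delta E v) = int (card (delta E v \<inter> induced_edges E S))"
      by (rule sy) (auto simp: delta_def)
    have fin: "finite (delta E v \<inter> induced_edges E S)" using finE by (simp add: delta_def)
    show "sum y (delta E v) \<le> x v"
    proof (cases "v \<in> S")
      case True
      have "card (delta E v \<inter> induced_edges E S) \<le> Suc 0"
        unfolding card_le_Suc0_iff_eq[OF fin]
      proof (intro ballI)
        fix e f assume "e \<in> delta E v \<inter> induced_edges E S" "f \<in> delta E v \<inter> induced_edges E S"
        then have h: "e\<in>E" "f\<in>E" "e\<subseteq>S" "f\<subseteq>S" "v\<in>e" "v\<in>f" by (auto simp: delta_def induced_edges_def)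
        show "e = f" by (rule share[OF G co h])
      qed
      thus ?thesis using eq xS vV True by simp
    next
      case False
      have "delta E v \<inter> induced_edges E S = {}" using False by (auto simp: delta_def induced_edges_def)
      thus ?thesis using eq xS vV False by simp
    qed
  qed
  show "\<forall>(W, F)\<in>U. sum x W + sum y (F \<inter> induced_edges E (V - W)) - sum y (induced_edges E W) \<le> 1"
  proof (intro ballI, clarify)
    fix W F assume WF: "(W,F)\<in>U"
    have uc: "utter_clique V E W F" using Ucl WF by blast
    have WV: "W \<subseteq> V" and FE: "F \<subseteq> E" using uc unfolding utter_clique_def by auto
    have finW: "finite W" using finV WV finite_subset by blast
    have "sum x W = (\<Sum>v\<in>W. if v \<in> S then 1 else 0)"
      apply (rule sum.cong) using xS WV by auto
    hence sx: "sum x W = int (card (W \<inter> S))" using sum_ind[OF finW] by simp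
    have s1: "sum y (F \<inter> induced_edges E (V - W)) = int (card (F \<inter> induced_edges E (V - W) \<inter> induced_edges E S))"
      by (rule sy) (use FE in auto)
    have s2: "sum y (induced_edges E W) = int (card (induced_edges E W \<inter> induced_edges E S))"
      by (rule sy) (auto simp: induced_edges_def)
    show "sum x W + sum y (F \<inter> induced_edges E (V - W)) - sum y (induced_edges E W) \<le> 1"
      using clique_card[OF G co uc] sx s1 s2 by simp
  qed
qed

lemma fwd:
  fixes x :: "'a \<Rightarrow> int" and y :: "'a set \<Rightarrow> int"
  assumes G: "graph V E" and Ucl: "\<forall>(W, F)\<in>U. utter_clique V E W F"
    and Ucov: "(\<Union>(W, F)\<in>U. induced_edges E W) = E"
    and x01: "\<forall>v\<in>V. x v \<in> {0, 1}" and y01: "\<forall>e\<in>E. y e \<in> {0, 1}"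
    and cl: "\<forall>(W, F)\<in>U. sum x W + sum y (F \<inter> induced_edges E (V - W))
                       - sum y (induced_edges E W) \<le> 1"
    and dl: "\<forall>v\<in>V. sum y (delta E v) \<le> x v"
  shows "\<exists>S. co2plex V E S \<and> (\<forall>v\<in>V. x v = (if v \<in> S then 1 else 0))
           \<and> (\<forall>e\<in>E. y e = (if e \<in> induced_edges E S then 1 else 0))"
proof -
  have finE: "finite E" using G by (rule finE)
  have finV: "finite V" using G unfolding graph_def by blast
  define S where "S = {v\<in>V. x v = 1}"
  have ynn: "\<forall>e\<in>E. y e \<ge> 0" using y01 by auto
  have dfin: "finite (delta E v)" for v using finE by (simp add: delta_def)
  have a: "e \<subseteq> S" if "e\<in>E" "y e = 1" for e
  proof
    fix v assume "v\<in>e"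
    hence vV: "v\<in>V" using edge_sub[OF G that(1)] \<open>v\<in>e\<close> by blast
    have "e \<in> delta E v" using that \<open>v\<in>e\<close> by (simp add: delta_def)
    hence "y e \<le> sum y (delta E v)"
      by (rule member_le_sum) (use dfin ynn in \<open>auto simp: delta_def\<close>)
    moreover have "sum y (delta E v) \<le> x v" using dl vV by blast
    ultimately have "x v \<ge> 1" using that(2) by linarith
    thus "v\<in>S" using x01 vV S_def by auto
  qed
  have d2: "False" if "v\<in>V" "f\<in>E" "g\<in>E" "f\<noteq>g" "v\<in>f" "v\<in>g" "y f = 1" "y g = 1" for v f g
  proof -
    have "sum y {f,g} \<le> sum y (delta E v)"
      apply (rule sum_mono2) using dfin that ynn by (auto simp: delta_def)
    moreover have "sum y {f,g} = 2" using that by simp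
    moreover have "x v \<le> 1" using x01 that by auto
    moreover have "sum y (delta E v) \<le> x v" using dl that(1) by blast
    ultimately show False by linarith
  qed
  have c: "y e = 1" if "e\<in>E" "e\<subseteq>S" for e
  proof -
    have eU: "e \<in> (\<Union>(W, F)\<in>U. induced_edges E W)" using Ucov that(1) by simp
    obtain W F where WF: "(W,F)\<in>U" "e \<in> induced_edges E W" using eU by auto
    have ucW: "utter_clique V E W F" using Ucl WF by blast
    have WV: "W \<subseteq> V" using ucW unfolding utter_clique_def by blast
    hence finW: "finite W" using finV finite_subset by blast
    define A where "A = W \<inter> S"
    define M where "M = {f\<in>induced_edges E W. y f = 1}"
    have finA: "finite A" using finW A_def by simp
    have MA: "f \<subseteq> A" if "f\<in>M" for f using a that unfolding M_def A_def induced_edges_def by auto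
    have Mdisj: "pairwise disjnt M"
      unfolding pairwise_def disjnt_def
    proof (intro ballI impI)
      fix f g assume fg: "f\<in>M" "g\<in>M" "f\<noteq>g"
      show "f \<inter> g = {}"
      proof (rule ccontr)
        assume "f\<inter>g \<noteq> {}" then obtain v where v: "v\<in>f" "v\<in>g" by blast
        moreover have "v\<in>V" using v fg edge_sub[OF G] unfolding M_def induced_edges_def by blast
        ultimately show False using d2[of v f g] fg unfolding M_def induced_edges_def by simp
      qed
    qed
    have cardM2: "card (\<Union>M) = 2 * card M"
    proof -
      have "card (\<Union>M) = sum card M"
        apply (rule card_Union_disjoint[OF Mdisj]) using MA finA finite_subset by blast
      also have "\<dots> = sum (\<lambda>_. 2) M"
        apply (rule sum.cong) using G unfolding M_def induced_edges_def graph_def by auto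
      finally show ?thesis by simp
    qed
    have "\<Union>M \<subseteq> A" using MA by blast
    hence M2A: "2 * card M \<le> card A" using cardM2 card_mono finA by metis
    have sxW: "sum x W = int (card A)"
    proof -
      have "sum x W = (\<Sum>v\<in>W. if v\<in>S then 1 else 0)"
        apply (rule sum.cong) using WV x01 S_def by auto
      then show ?thesis using sum_ind[OF finW, of S] A_def by simp
    qed
    have syW: "sum y (induced_edges E W) = int (card M)"
    proof -
      have fin: "finite (induced_edges E W)" using finE by (simp add: induced_edges_def)
      have "sum y (induced_edges E W) = (\<Sum>f\<in>induced_edges E W. if f\<in>M then 1 else 0)"
        apply (rule sum.cong) using y01 M_def induced_edges_def by auto
      also have "\<dots> = int (card (induced_edges E W \<inter> M))" by (rule sum_ind[OF fin])
      also have "induced_edges E W \<inter> M = M" using M_def by auto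
      finally show ?thesis .
    qed
    have syF: "sum y (F \<inter> induced_edges E (V - W)) \<ge> 0"
      apply (rule sum_nonneg) using ynn induced_edges_def by auto
    have "sum x W + sum y (F \<inter> induced_edges E (V - W)) - sum y (induced_edges E W) \<le> 1"
      using cl WF(1) by blast
    hence ineq: "card A \<le> 1 + card M" using sxW syW syF by linarith
    have eA: "e \<subseteq> A" using WF that unfolding A_def induced_edges_def by auto
    have ce: "card e = 2" using G that graph_def by blast
    have "2 \<le> card A" using card_mono[OF finA eA] ce by simp
    hence cA: "card A = 2" and cM: "card M \<ge> 1" using ineq M2A by linarith+
    have Ae: "A = e" using card_subset_eq[OF finA eA] ce cA by simp
    obtain f where fM: "f\<in>M" using cM by (metis card.empty ex_in_conv not_one_le_zero)
    hence fe: "f \<subseteq> e" using MA Ae by blast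
    have cf: "card f = 2" using fM G unfolding M_def induced_edges_def graph_def by auto
    have "finite e" using ce card.infinite by force
    hence "f = e" using card_subset_eq[OF _ fe] ce cf by simp
    thus "y e = 1" using fM M_def by simp
  qed
  show ?thesis
  proof (intro exI conjI)
    show "co2plex V E S"
      unfolding co2plex_def
    proof (intro conjI ballI)
      show "S \<subseteq> V" using S_def by auto
      fix v assume vS: "v\<in>S"
      have fin: "finite {u \<in> S. {u, v} \<in> E}" using finV S_def by simp
      show "card {u \<in> S. {u, v} \<in> E} \<le> 1"
        unfolding One_nat_def card_le_Suc0_iff_eq[OF fin]
      proof (intro ballI)
        fix a b assume ab: "a \<in> {u \<in> S. {u, v} \<in> E}" "b \<in> {u \<in> S. {u, v} \<in> E}"
        show "a = b"
        proof (rule ccontr)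
          assume ne: "a \<noteq> b"
          have "y {a,v} = 1" using c ab vS by auto
          moreover have "y {b,v} = 1" using c ab vS by auto
          moreover have "{a,v} \<noteq> {b,v}" using ne by (auto simp: doubleton_eq_iff)
          ultimately show False using d2[of v "{a,v}" "{b,v}"] ab vS S_def by auto
        qed
      qed
    qed
    show "\<forall>v\<in>V. x v = (if v \<in> S then 1 else 0)" using x01 S_def by auto
    show "\<forall>e\<in>E. y e = (if e \<in> induced_edges E S then 1 else 0)"
    proof
      fix e assume eE: "e\<in>E"
      show "y e = (if e \<in> induced_edges E S then 1 else 0)"
      proof (cases "e \<subseteq> S")
        case True thus ?thesis using c eE by (simp add: induced_edges_def)
      next
        case False
        hence "y e \<noteq> 1" using a eE by blast
        thus ?thesis using y01 eE False by (auto simp: induced_edges_def)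
      qed
    qed
  qed
qed

theorem mainTheorem15:
  fixes V :: "'a set" and E :: "'a set set"
    and U :: "('a set \<times> 'a set set) set"
  assumes G: "graph V E"
    and Ucl: "\<forall>(W, F)\<in>U. utter_clique V E W F"
    and Ucov: "(\<Union>(W, F)\<in>U. induced_edges E W) = E"
  shows "\<forall>(x :: 'a \<Rightarrow> int) (y :: 'a set \<Rightarrow> int).
     (\<forall>v\<in>V. x v \<in> {0, 1}) \<and> (\<forall>e\<in>E. y e \<in> {0, 1})
     \<and> (\<forall>(W, F)\<in>U. sum x W + sum y (F \<inter> induced_edges E (V - W))
                       - sum y (induced_edges E W) \<le> 1)
     \<and> (\<forall>v\<in>V. sum y (delta E v) \<le> x v)
   \<longleftrightarrow> (\<exists>S. co2plex V E S \<and> (\<forall>v\<in>V. x v = (if v \<in> S then 1 else 0))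
           \<and> (\<forall>e\<in>E. y e = (if e \<in> induced_edges E S then 1 else 0)))"
proof (intro allI iffI)
  fix x :: "'a \<Rightarrow> int" and y :: "'a set \<Rightarrow> int"
  {
    assume H: "(\<forall>v\<in>V. x v \<in> {0, 1}) \<and> (\<forall>e\<in>E. y e \<in> {0, 1})
     \<and> (\<forall>(W, F)\<in>U. sum x W + sum y (F \<inter> induced_edges E (V - W))
                       - sum y (induced_edges E W) \<le> 1)
     \<and> (\<forall>v\<in>V. sum y (delta E v) \<le> x v)"
    show "\<exists>S. co2plex V E S \<and> (\<forall>v\<in>V. x v = (if v \<in> S then 1 else 0))
           \<and> (\<forall>e\<in>E. y e = (if e \<in> induced_edges E S then 1 else 0))"
      using H apply (elim conjE)
      apply (rule fwd[OF G Ucl Ucov])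
      apply assumption+
      done
  }
  {
    assume "\<exists>S. co2plex V E S \<and> (\<forall>v\<in>V. x v = (if v \<in> S then 1 else 0))
           \<and> (\<forall>e\<in>E. y e = (if e \<in> induced_edges E S then 1 else 0))"
    then obtain S where S: "co2plex V E S" "\<forall>v\<in>V. x v = (if v \<in> S then 1 else 0)"
      "\<forall>e\<in>E. y e = (if e \<in> induced_edges E S then 1 else 0)" by blast
    show "(\<forall>v\<in>V. x v \<in> {0, 1}) \<and> (\<forall>e\<in>E. y e \<in> {0, 1})
     \<and> (\<forall>(W, F)\<in>U. sum x W + sum y (F \<inter> induced_edges E (V - W))
                       - sum y (induced_edges E W) \<le> 1)
     \<and> (\<forall>v\<in>V. sum y (delta E v) \<le> x v)"
      by (rule bwd[OF G Ucl S])
  }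
qed

end
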